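(* Let $d$ be an even positive integer and $n$ an odd integer such that $n \ge \max\{5(d+1)/2,\ 2d+7\}$. Then there are spherical 3-designs of size $n$ on $S^d$.
   Context: $S^d$ is the unit sphere in $\mathbb{R}^{d+1}$. A spherical $t$-design of size $n$ on $S^d$ is a collection $X$ of $n$ points of $S^d$ such that for every polynomial of degree at most $t$ its average over $S^d$ (surface measure) equals $\frac1{|X|}\sum_{x\in X}f(x)$. *)

theory Defs
  imports "HOL-Analysis.Analysis"
begin

text \<open>Points of R^(d+1) are vectors of type real^'n with CARD('n) = d+1.\<close>

definition poly_deg_le :: "nat \<Rightarrow> (real^'n \<Rightarrow> real) \<Rightarrow> bool" where
  "poly_deg_le t f \<longleftrightarrow>
     (\<exists>(A :: ('n \<Rightarrow> nat) set) (c :: ('n \<Rightarrow> nat) \<Rightarrow> real).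
        finite A \<and> (\<forall>\<alpha>\<in>A. (\<Sum>i\<in>UNIV. \<alpha> i) \<le> t) \<and>
        f = (\<lambda>x. \<Sum>\<alpha>\<in>A. c \<alpha> * (\<Prod>i\<in>UNIV. (x $ i) ^ \<alpha> i)))"

text \<open>Average over the unit sphere w.r.t. (normalized) surface measure, realised as the
  cone measure: the normalized surface measure of A is the normalized Lebesgue measure of
  the cone {r x | x in A, 0 < r <= 1}, i.e. the pushforward of uniform measure on the unit
  ball under x / |x|.\<close>
definition sphere_avg :: "('a::euclidean_space \<Rightarrow> real) \<Rightarrow> real" where
  "sphere_avg f =
     (LINT x : ball 0 1 | lborel. f (scaleR (1 / norm x) x)) / measure lborel (ball (0::'a) 1)"

definition spherical_design :: "nat \<Rightarrow> (real^'n) set \<Rightarrow> bool" where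
  "spherical_design t X \<longleftrightarrow>
     finite X \<and> X \<noteq> {} \<and> X \<subseteq> sphere 0 1 \<and>
     (\<forall>f. poly_deg_le t f \<longrightarrow> sphere_avg f = (\<Sum>x\<in>X. f x) / real (card X))"

end

theory Submission
  imports Defs
begin


lemma cis_eq_1_int:
  assumes "cis t = 1" shows "\<exists>k::int. t = real_of_int k * 2 * pi"
proof -
  have "cos t = 1" using assms by (metis cis.sel(1) one_complex.sel(1))
  then show ?thesis using cos_one_2pi_int by blast
qed

lemma sum_cos_lin:
  fixes F :: int and N :: nat and p :: real
  assumes N: "N > 0"
  shows "(\<Sum>j<N. cos (2*pi * of_int F*real j/real N + p)) = (if int N dvd F then real N * cos p else 0)"
proof (cases "int N dvd F")
  case True
  then obtain q where q: "F = int N * q" by blast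
  have "cos (2*pi * of_int F*real j/real N + p) = cos p" for j
  proof -
    have "2*pi * of_int F*real j/real N = 2*pi * of_int (q * int j)" using N by (simp add: q field_simps)
    then show ?thesis by (simp only: cos_add cos_int_2pin sin_int_2pin)
  qed
  then show ?thesis using True by simp
next
  case False
  define z where "z = cis (2*pi * of_int F/real N)"
  have zj: "z ^ j = cis (2*pi * of_int F*real j/real N)" for j
    unfolding z_def Complex.DeMoivre by (simp add: field_simps)
  have zN: "z ^ N = 1"
  proof -
    have "z ^ N = cis (2*pi * of_int F)" unfolding zj using N by simp
    also have "\<dots> = 1" by (rule cis_multiple_2pi) simp
    finally show ?thesis .
  qed
  have z1: "z \<noteq> 1"
  proof
    assume "z = 1"
    then have "cis (2*pi * of_int F/real N) = 1" unfolding z_def .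
    then obtain k :: int where k: "2*pi * of_int F/real N = real_of_int k * 2 * pi"
      using cis_eq_1_int by blast
    then have "of_int F = real_of_int k * real N" using N by (simp add: field_simps)
    then have "F = k * int N" by (metis of_int_eq_iff of_int_mult of_int_of_nat_eq)
    then show False using False by simp
  qed
  have S: "(\<Sum>j<N. z ^ j) = 0" using geometric_sum[OF z1, of N] zN by simp
  have "(\<Sum>j<N. cis (2*pi * of_int F*real j/real N) * cis p) = 0"
    using S by (simp add: zj[symmetric] sum_distrib_right[symmetric])
  then have "Re (\<Sum>j<N. cis (2*pi * of_int F*real j/real N) * cis p) = 0" by simp
  moreover have "Re (cis a * cis b) = cos (a + b)" for a b by (simp add: cis_mult)
  ultimately show ?thesis using False by (simp add: Re_sum)
qed

definition C :: "nat \<Rightarrow> int \<Rightarrow> real \<Rightarrow> real" where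
  "C N F p = (if int N dvd F then real N * cos p else 0)"

lemma sum_cos_lin': "N > 0 \<Longrightarrow> (\<Sum>j<N. cos (2*pi * of_int F*real j/real N + p)) = C N F p"
  unfolding C_def by (rule sum_cos_lin)

lemma sum_cos1:
  assumes "N > 0"
  shows "(\<Sum>j<N. a * cos (2*pi * of_int f*real j/real N + p)) = a * C N f p"
  using sum_cos_lin'[OF assms] by (simp add: sum_distrib_left[symmetric])

lemma th_add: "2*pi * of_int (f+g)*x/(n::real) = 2*pi * of_int f*x/n + 2*pi * of_int g*x/n"
  by (simp add: algebra_simps add_divide_distrib)
lemma th_diff: "2*pi * of_int (f-g)*x/(n::real) = 2*pi * of_int f*x/n - 2*pi * of_int g*x/n"
  by (simp add: algebra_simps diff_divide_distrib)

lemma cos2_abs: "cos ((x::real) + p) * cos (y + q) = (cos ((x - y) + (p - q)) + cos ((x + y) + (p + q))) / 2"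
proof -
  have "cos (x + p) * cos (y + q) = (cos ((x+p) - (y+q)) + cos ((x+p) + (y+q))) / 2" by (rule cos_times_cos)
  moreover have "(x+p) - (y+q) = (x - y) + (p - q)" "(x+p) + (y+q) = (x + y) + (p + q)" by simp_all
  ultimately show ?thesis by simp
qed

lemma cos3_abs: "cos ((x::real) + p) * cos (y + q) * cos (z + u) =
   (cos ((x - y - z) + (p - q - u)) + cos ((x - y + z) + (p - q + u))
  + cos ((x + y - z) + (p + q - u)) + cos ((x + y + z) + (p + q + u))) / 4"
proof -
  have aux: "\<And>A B c::real. (A + B)/2 * c = (A*c + B*c)/2" by (simp add: algebra_simps)
  have aux4: "\<And>A B C D::real. ((A+B)/2 + (C+D)/2)/2 = (A+B+C+D)/4" by (simp add: field_simps)
  have "cos (x + p) * cos (y + q) * cos (z + u) = (cos ((x - y) + (p - q)) * cos (z + u) + cos ((x + y) + (p + q)) * cos (z + u)) / 2"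
    by (simp only: cos2_abs aux)
  also have "\<dots> = ((cos (((x - y) - z) + ((p - q) - u)) + cos (((x - y) + z) + ((p - q) + u)))/2
        + (cos (((x + y) - z) + ((p + q) - u)) + cos (((x + y) + z) + ((p + q) + u)))/2) / 2"
    by (simp only: cos2_abs)
  also have "\<dots> = (cos ((x - y - z) + (p - q - u)) + cos ((x - y + z) + (p - q + u))
  + cos ((x + y - z) + (p + q - u)) + cos ((x + y + z) + (p + q + u))) / 4"
    by (rule aux4)
  finally show ?thesis .
qed

lemma prod2: "(a::real) * cos (x + p) * (b * cos (y + q)) = a*b/2 * (cos ((x - y) + (p - q)) + cos ((x + y) + (p + q)))"
proof -
  have "a * cos (x + p) * (b * cos (y + q)) = a*b*(cos (x + p) * cos (y + q))" by simp
  also have "\<dots> = a*b*((cos ((x - y) + (p - q)) + cos ((x + y) + (p + q)))/2)" by (simp only: cos2_abs)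
  finally show ?thesis by simp
qed

lemma prod3: "(a::real) * cos (x + p) * (b * cos (y + q)) * (c * cos (z + u)) =
   a*b*c/4 * (cos ((x - y - z) + (p - q - u)) + cos ((x - y + z) + (p - q + u))
  + cos ((x + y - z) + (p + q - u)) + cos ((x + y + z) + (p + q + u)))"
proof -
  have "(a::real) * cos (x + p) * (b * cos (y + q)) * (c * cos (z + u)) = a*b*c*(cos (x + p) * cos (y + q) * cos (z + u))" by simp
  also have "\<dots> = a*b*c*((cos ((x - y - z) + (p - q - u)) + cos ((x - y + z) + (p - q + u))
  + cos ((x + y - z) + (p + q - u)) + cos ((x + y + z) + (p + q + u))) / 4)" by (simp only: cos3_abs)
  finally show ?thesis by simp
qed

lemma sum_cos2:
  assumes "N > 0"
  shows "(\<Sum>j<N. a * cos (2*pi * of_int f*real j/real N + p) * (b * cos (2*pi * of_int g*real j/real N + q)))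
     = a * b / 2 * (C N (f - g) (p - q) + C N (f + g) (p + q))"
proof -
  have e: "a * cos (2*pi * of_int f*real j/real N + p) * (b * cos (2*pi * of_int g*real j/real N + q))
     = a * b / 2 * (cos (2*pi * of_int (f - g)*real j/real N + (p - q)) + cos (2*pi * of_int (f+g)*real j/real N + (p + q)))" for j
    unfolding th_add th_diff by (rule prod2)
  show ?thesis unfolding e sum_distrib_left[symmetric] sum.distrib sum_cos_lin'[OF assms] ..
qed

lemma sum_cos3:
  assumes "N > 0"
  shows "(\<Sum>j<N. a * cos (2*pi * of_int f*real j/real N + p) * (b * cos (2*pi * of_int g*real j/real N + q))
          * (c * cos (2*pi * of_int h*real j/real N + u)))
     = a * b * c / 4 * (C N (f - g - h) (p - q - u) + C N (f - g + h) (p - q + u)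
                      + C N (f + g - h) (p + q - u) + C N (f + g + h) (p + q + u))"
proof -
  have e: "a * cos (2*pi * of_int f*real j/real N + p) * (b * cos (2*pi * of_int g*real j/real N + q))
          * (c * cos (2*pi * of_int h*real j/real N + u))
     = a * b * c / 4 * (cos (2*pi * of_int (f - g - h)*real j/real N + (p - q - u))
         + cos (2*pi * of_int (f - g + h)*real j/real N + (p - q + u))
         + cos (2*pi * of_int (f + g - h)*real j/real N + (p + q - u))
         + cos (2*pi * of_int (f + g + h)*real j/real N + (p + q + u)))" for j
    unfolding th_add th_diff by (rule prod3)
  show ?thesis unfolding e sum_distrib_left[symmetric] sum.distrib sum_cos_lin'[OF assms] ..
qed



definition sp :: "('n \<Rightarrow> 'n) \<Rightarrow> ('n \<Rightarrow> real) \<Rightarrow> real^'n \<Rightarrow> real^'n" where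
  "sp p s x = (\<chi> i. s i * x $ p i)"

lemma prod_Basis_cart: "(\<Prod>b\<in>(Basis::(real^'n) set). f b) = (\<Prod>i\<in>UNIV. f (axis i 1))"
  by (simp add: Basis_vec_def UNION_singleton_eq_range prod.reindex axis_eq_axis inj_on_def)

lemma lborel_sp:
  fixes p :: "'n::finite \<Rightarrow> 'n" and s :: "'n \<Rightarrow> real"
  assumes p: "bij p" and s: "\<And>i. s i = 1 \<or> s i = -1"
  shows "distr lborel borel (sp p s) = lborel"
proof (rule lborel_eqI[symmetric])
  show "sets (distr lborel borel (sp p s)) = sets borel" by simp
  fix l u :: "real^'n"
  assume le: "\<And>b. b \<in> Basis \<Longrightarrow> l \<bullet> b \<le> u \<bullet> b"
  then have le': "l $ i \<le> u $ i" for i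
    using le[of "axis i 1"] by (auto simp: Basis_vec_def cart_eq_inner_axis)
  define q where "q = inv p"
  have pq: "p (q j) = j" for j unfolding q_def using p by (simp add: bij_is_surj surj_f_inv_f)
  have qp: "q (p j) = j" for j unfolding q_def using p by (simp add: bij_is_inj inv_f_f)
  have bq: "bij q" unfolding q_def using p by (simp add: bij_imp_bij_inv)
  define l' :: "real^'n" where "l' = (\<chi> j. if s (q j) = 1 then l $ q j else - u $ q j)"
  define u' :: "real^'n" where "u' = (\<chi> j. if s (q j) = 1 then u $ q j else - l $ q j)"
  have meas: "sp p s \<in> borel_measurable borel"
    unfolding sp_def by (intro borel_measurable_continuous_onI continuous_intros)
  have pre: "sp p s -` box l u = box l' u'"
  proof -
    have "x \<in> sp p s -` box l u \<longleftrightarrow> (\<forall>i. l $ i < s i * x $ p i \<and> s i * x $ p i < u $ i)" for x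
      by (simp add: sp_def mem_box_cart)
    also have "\<dots> x \<longleftrightarrow> (\<forall>j. l $ q j < s (q j) * x $ j \<and> s (q j) * x $ j < u $ q j)" for x
      by (metis pq qp)
    also have "\<dots> x \<longleftrightarrow> x \<in> box l' u'" for x
    proof -
      have "(l $ q j < s (q j) * x $ j \<and> s (q j) * x $ j < u $ q j) \<longleftrightarrow> (l' $ j < x $ j \<and> x $ j < u' $ j)" for j
        using s[of "q j"] by (auto simp: l'_def u'_def)
      then show ?thesis by (simp add: mem_box_cart)
    qed
    finally show ?thesis by blast
  qed
  have "emeasure (distr lborel borel (sp p s)) (box l u) = emeasure lborel (box l' u')"
    using meas by (simp add: emeasure_distr pre)
  also have "\<dots> = ennreal (\<Prod>i\<in>UNIV. u' $ i - l' $ i)"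
  proof -
    have "l' $ i \<le> u' $ i" for i using le'[of "q i"] s[of "q i"] by (auto simp: l'_def u'_def)
    then have "\<forall>b\<in>Basis. l' \<bullet> b \<le> u' \<bullet> b" by (auto simp: Basis_vec_def cart_eq_inner_axis[symmetric])
    then show ?thesis by (simp add: emeasure_lborel_box_eq prod_Basis_cart cart_eq_inner_axis[symmetric])
  qed
  also have "(\<Prod>i\<in>UNIV. u' $ i - l' $ i) = (\<Prod>i\<in>UNIV. u $ q i - l $ q i)"
    by (rule prod.cong) (use s in \<open>auto simp: l'_def u'_def\<close>)
  also have "\<dots> = (\<Prod>i\<in>UNIV. u $ i - l $ i)"
    using prod.reindex_bij_betw[of q UNIV UNIV "\<lambda>i. u $ i - l $ i"] bq by (simp add: bij_betw_def)
  also have "\<dots> = (\<Prod>b\<in>Basis. (u - l) \<bullet> b)" by (simp add: prod_Basis_cart cart_eq_inner_axis[symmetric])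
  finally show "emeasure (distr lborel borel (sp p s)) (box l u) = (\<Prod>b\<in>Basis. (u - l) \<bullet> b)" .
qed

definition nz :: "real^'n \<Rightarrow> real^'n" where "nz x = scaleR (1 / norm x) x"

definition J :: "(real^'n \<Rightarrow> real) \<Rightarrow> real" where
  "J g = (LINT x : ball 0 1 | lborel. g (nz x))"

lemma sphere_avg_J: "sphere_avg (g::real^'n \<Rightarrow> real) = J g / measure lborel (ball (0::real^'n) 1)"
  by (simp add: sphere_avg_def J_def nz_def)

lemma norm_sp:
  assumes p: "bij p" and s: "\<And>i. s i = 1 \<or> s i = -1"
  shows "norm (sp p s x) = norm x"
proof -
  have "(\<Sum>i\<in>UNIV. (norm (s i * x $ p i))\<^sup>2) = (\<Sum>i\<in>UNIV. (norm (x $ p i))\<^sup>2)"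
  proof (rule sum.cong[OF refl])
    fix i
    have "\<bar>s i\<bar> = 1" using s[of i] by auto
    then show "(norm (s i * x $ p i))\<^sup>2 = (norm (x $ p i))\<^sup>2" by (simp add: abs_mult)
  qed
  also have "\<dots> = (\<Sum>i\<in>UNIV. (norm (x $ i))\<^sup>2)"
    using sum.reindex_bij_betw[of p UNIV UNIV "\<lambda>i. (norm (x $ i))\<^sup>2"] p by (simp add: bij_betw_def)
  finally show ?thesis by (simp add: norm_vec_def L2_set_def sp_def)
qed

lemma sp_scaleR: "sp p s (c *\<^sub>R x) = c *\<^sub>R sp p s x"
  by (simp add: sp_def vec_eq_iff)

lemma nz_meas[measurable]: "nz \<in> borel_measurable borel"
  unfolding nz_def by measurable

lemma sp_meas[measurable]: "sp p s \<in> borel_measurable borel"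
  unfolding sp_def by (intro borel_measurable_continuous_onI continuous_intros)

lemma J_sp:
  fixes g :: "real^'n \<Rightarrow> real"
  assumes p: "bij p" and s: "\<And>i. s i = 1 \<or> s i = -1" and g[measurable]: "g \<in> borel_measurable borel"
  shows "J (\<lambda>y. g (sp p s y)) = J g"
proof -
  let ?h = "\<lambda>x. indicator (ball (0::real^'n) 1) x *\<^sub>R g (nz x)"
  have [measurable]: "ball (0::real^'n) 1 \<in> sets borel" by simp
  have gm[measurable]: "(\<lambda>x. g (nz x)) \<in> borel_measurable borel"
    using measurable_compose[OF nz_meas g] .
  have hm: "?h \<in> borel_measurable borel" by measurable
  have "J g = integral\<^sup>L lborel ?h" unfolding J_def set_lebesgue_integral_def ..
  also have "\<dots> = integral\<^sup>L (distr lborel borel (sp p s)) ?h" by (simp add: lborel_sp[OF p s])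
  also have "\<dots> = (LINT x|lborel. ?h (sp p s x))"
    by (rule integral_distr) (simp_all add: hm)
  also have "\<dots> = (LINT x|lborel. indicator (ball (0::real^'n) 1) x *\<^sub>R g (sp p s (nz x)))"
  proof (rule Bochner_Integration.integral_cong[OF refl])
    fix x :: "real^'n"
    have "nz (sp p s x) = sp p s (nz x)" unfolding nz_def norm_sp[OF p s] sp_scaleR ..
    moreover have "indicator (ball (0::real^'n) 1) (sp p s x) = (indicator (ball (0::real^'n) 1) x :: real)"
      by (simp add: indicator_def norm_sp[OF p s])
    ultimately show "?h (sp p s x) = indicator (ball (0::real^'n) 1) x *\<^sub>R g (sp p s (nz x))" by simp
  qed
  also have "\<dots> = J (\<lambda>y. g (sp p s y))" unfolding J_def set_lebesgue_integral_def ..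
  finally show ?thesis ..
qed

lemma J_uminus: "J (\<lambda>y. - g y) = - J g"
  unfolding J_def set_lebesgue_integral_def by simp

lemma norm_nz_le: "norm (nz x) \<le> 1"
  by (cases "x = 0") (simp_all add: nz_def)

lemma J_integrable:
  fixes g :: "real^'n \<Rightarrow> real"
  assumes g[measurable]: "g \<in> borel_measurable borel" and B: "\<And>y. norm y \<le> 1 \<Longrightarrow> \<bar>g y\<bar> \<le> B"
  shows "set_integrable lborel (ball 0 1) (\<lambda>x. g (nz x))"
  unfolding set_integrable_def
proof (rule integrableI_bounded_set_indicator)
  show "ball 0 1 \<in> sets lborel" by simp
  show "(\<lambda>x. g (nz x)) \<in> borel_measurable lborel" by measurable
  show "emeasure lborel (ball (0::real^'n) 1) < \<infinity>" by (rule emeasure_lborel_ball_finite)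
  show "AE x\<in>ball 0 1 in lborel. norm (g (nz x)) \<le> B" using B norm_nz_le by auto
qed

lemma J_sum:
  fixes g :: "'b \<Rightarrow> real^'n \<Rightarrow> real"
  assumes "finite A" and "\<And>a. a \<in> A \<Longrightarrow> set_integrable lborel (ball 0 1) (\<lambda>x. g a (nz x))"
  shows "J (\<lambda>y. \<Sum>a\<in>A. g a y) = (\<Sum>a\<in>A. J (g a))"
proof -
  have "J (\<lambda>y. \<Sum>a\<in>A. g a y) = (LINT x|lborel. (\<Sum>a\<in>A. indicator (ball 0 1) x *\<^sub>R g a (nz x)))"
    unfolding J_def set_lebesgue_integral_def by (simp add: sum_distrib_left)
  also have "\<dots> = (\<Sum>a\<in>A. (LINT x|lborel. indicator (ball 0 1) x *\<^sub>R g a (nz x)))"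
    using assms(2) unfolding set_integrable_def by (simp add: integral_sum)
  finally show ?thesis unfolding J_def set_lebesgue_integral_def .
qed

lemma J_cmult: "J (\<lambda>y. c * g y) = c * J g"
  unfolding J_def set_lebesgue_integral_def by (simp add: mult.left_commute[of _ c])



definition mon :: "('n \<Rightarrow> nat) \<Rightarrow> real^'n \<Rightarrow> real" where
  "mon a x = (\<Prod>i\<in>UNIV. (x $ i) ^ a i)"

definition sq_at :: "'n \<Rightarrow> 'n \<Rightarrow> nat" where
  "sq_at c = (\<lambda>i. if i = c then 2 else 0)"

definition Sv :: "('n::finite \<Rightarrow> nat) \<Rightarrow> real" where
  "Sv a = (if a = (\<lambda>_. 0) then 1 else if (\<exists>c. a = sq_at c) then 1 / real CARD('n) else 0)"

lemma mono_meas[measurable]: "mon a \<in> borel_measurable borel"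
  unfolding mon_def by (intro borel_measurable_continuous_onI continuous_intros)

lemma mono_bound:
  assumes "norm y \<le> 1" shows "\<bar>mon a y\<bar> \<le> 1"
proof -
  have "\<bar>mon a y\<bar> = (\<Prod>i\<in>UNIV. \<bar>y $ i\<bar> ^ a i)" unfolding mon_def by (simp add: abs_prod power_abs)
  also have "\<dots> \<le> 1"
  proof (rule prod_le_1)
    fix i
    have "\<bar>y $ i\<bar> \<le> 1" using component_le_norm_cart[of y i] assms by linarith
    then show "0 \<le> \<bar>y $ i\<bar> ^ a i \<and> \<bar>y $ i\<bar> ^ a i \<le> 1" by (simp add: power_le_one)
  qed
  finally show ?thesis .
qed

lemma mono_int: "set_integrable lborel (ball 0 1) (\<lambda>x. mon a (nz x))"
  by (rule J_integrable[OF mono_meas mono_bound])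

lemma mono_zero: "mon (\<lambda>_. 0) = (\<lambda>_. 1)" by (rule ext) (simp add: mon_def)

lemma mono_sq_at: "mon (sq_at c) y = (y $ c)^2"
proof -
  have "mon (sq_at c) y = (\<Prod>i\<in>UNIV. if i = c then (y $ c)^2 else 1)"
    unfolding mon_def sq_at_def by (rule prod.cong) auto
  then show ?thesis by simp
qed

lemma J_odd:
  fixes a :: "'n::finite \<Rightarrow> nat"
  assumes "odd (a c)" shows "J (mon a) = 0"
proof -
  define s :: "'n \<Rightarrow> real" where "s = (\<lambda>i. if i = c then -1 else 1)"
  have s: "s i = 1 \<or> s i = -1" for i by (simp add: s_def)
  have "mon a (sp id s y) = (\<Prod>i\<in>UNIV. s i ^ a i) * mon a y" for y
    unfolding mon_def sp_def by (simp add: power_mult_distrib prod.distrib)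
  moreover have "(\<Prod>i\<in>UNIV. s i ^ a i) = -1"
  proof -
    have "(\<Prod>i\<in>UNIV. s i ^ a i) = (\<Prod>i\<in>UNIV. if i = c then (-1) ^ a c else 1)"
      by (rule prod.cong) (auto simp: s_def)
    then show ?thesis using assms by simp
  qed
  ultimately have e: "mon a (sp id s y) = - mon a y" for y by simp
  have "J (mon a) = J (\<lambda>y. mon a (sp id s y))"
    by (rule J_sp[symmetric]) (simp_all add: s)
  also have "\<dots> = - J (mon a)" unfolding e J_uminus ..
  finally show ?thesis by simp
qed

lemma J_sq_eq:
  fixes a b :: "'n::finite"
  shows "J (mon (sq_at a)) = J (mon (sq_at b))"
proof -
  define p where "p = (\<lambda>i. if i = a then b else if i = b then a else i)"
  have pp: "p (p i) = i" for i by (simp add: p_def)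
  then have bp: "bij p" by (metis bijI' )
  have e: "mon (sq_at a) (sp p (\<lambda>_. 1) y) = mon (sq_at b) y" for y
    by (simp add: mono_sq_at sp_def p_def)
  have "J (mon (sq_at a)) = J (\<lambda>y. mon (sq_at a) (sp p (\<lambda>_. 1) y))"
    by (rule J_sp[symmetric]) (simp_all add: bp)
  also have "\<dots> = J (mon (sq_at b))" unfolding e ..
  finally show ?thesis .
qed

lemma J_one: "J (\<lambda>_::real^'n. 1) = measure lborel (ball (0::real^'n) 1)"
  unfolding J_def set_lebesgue_integral_def by simp

lemma J_sum_sq: "(\<Sum>c\<in>(UNIV::'n set). J (mon (sq_at c))) = measure lborel (ball (0::real^'n::finite) 1)"
proof -
  have "J (\<lambda>y. \<Sum>c\<in>(UNIV::'n set). mon (sq_at c) y) = (\<Sum>c\<in>(UNIV::'n set). J (mon (sq_at c)))"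
    using J_sum[of "UNIV::'n set" "\<lambda>c. mon (sq_at c)"] by (simp add: mono_int)
  then have "(\<Sum>c\<in>(UNIV::'n set). J (mon (sq_at c))) = J (\<lambda>y. \<Sum>c\<in>(UNIV::'n set). mon (sq_at c) y)" by (rule sym)
  also have "\<dots> = J (\<lambda>y::real^'n. (norm y)^2)"
  proof -
    have "(\<Sum>c\<in>UNIV. (y $ c)^2) = (norm y)^2" for y :: "real^'n"
      unfolding norm_vec_def L2_set_def by (simp add: sum_nonneg)
    then show ?thesis by (simp add: mono_sq_at)
  qed
  also have "\<dots> = (LINT x|lborel. indicator (ball (0::real^'n) 1) x)"
    unfolding J_def set_lebesgue_integral_def
  proof (rule integral_cong_AE)
    have [measurable]: "ball (0::real^'n) 1 \<in> sets borel" by simp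
    have c: "(\<lambda>y::real^'n. (norm y)^2) \<in> borel_measurable borel"
      by (intro borel_measurable_continuous_onI continuous_intros)
    have [measurable]: "(\<lambda>x::real^'n. (norm (nz x))^2) \<in> borel_measurable borel"
      using measurable_compose[OF nz_meas c] .
    show "(\<lambda>x. indicat_real (ball (0::real^'n) 1) x *\<^sub>R (norm (nz x))\<^sup>2) \<in> borel_measurable lborel" by measurable
    show "indicat_real (ball (0::real^'n) 1) \<in> borel_measurable lborel" by measurable
    show "AE x in lborel. indicat_real (ball (0::real^'n) 1) x *\<^sub>R (norm (nz x))\<^sup>2 = indicat_real (ball (0::real^'n) 1) x"
      using AE_lborel_singleton[of 0] by eventually_elim (simp add: nz_def)
  qed
  also have "\<dots> = measure lborel (ball (0::real^'n) 1)" by simp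
  finally show ?thesis .
qed

lemma J_sq: "J (mon (sq_at (c::'n::finite))) = measure lborel (ball (0::real^'n) 1) / real CARD('n)"
proof -
  have "(\<Sum>d\<in>(UNIV::'n set). J (mon (sq_at d))) = real CARD('n) * J (mon (sq_at c))"
  proof -
    have "(\<Sum>d\<in>(UNIV::'n set). J (mon (sq_at d))) = (\<Sum>d\<in>(UNIV::'n set). J (mon (sq_at c)))"
      by (rule sum.cong[OF refl]) (rule J_sq_eq)
    then show ?thesis by simp
  qed
  then have "real CARD('n) * J (mon (sq_at c)) = measure lborel (ball (0::real^'n) 1)"
    using J_sum_sq[where 'n='n] by simp
  then show ?thesis by (simp add: field_simps)
qed

lemma even_cases:
  fixes a :: "'n::finite \<Rightarrow> nat"
  assumes ev: "\<And>i. even (a i)" and s: "sum a UNIV \<le> 3"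
  shows "a = (\<lambda>_. 0) \<or> (\<exists>c. a = sq_at c)"
proof (cases "a = (\<lambda>_. 0)")
  case False
  then obtain c where c: "a c \<noteq> 0" by auto
  have le: "a c + a d \<le> 3" if "d \<noteq> c" for d
  proof -
    have "sum a {c, d} \<le> sum a UNIV" by (rule sum_mono2) auto
    then show ?thesis using that s by simp
  qed
  have "a c \<le> 3" using member_le_sum[of c UNIV a] s by simp
  then have ac: "a c = 2" using c ev[of c] by presburger
  have "a d = 0" if "d \<noteq> c" for d using le[OF that] ac ev[of d] by presburger
  then have "a = sq_at c" using ac by (auto simp: sq_at_def)
  then show ?thesis by blast
qed simp

lemma sphere_mono:
  fixes a :: "'n::finite \<Rightarrow> nat"
  assumes "sum a UNIV \<le> 3"
  shows "sphere_avg (mon a) = Sv a"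
proof -
  have V: "measure lborel (ball (0::real^'n) 1) > 0" by (rule content_ball_pos) simp
  show ?thesis
  proof (cases "\<exists>c. odd (a c)")
    case True
    then obtain c where "odd (a c)" by blast
    then have "J (mon a) = 0" by (rule J_odd)
    moreover have "a \<noteq> (\<lambda>_. 0)" "\<not> (\<exists>d. a = sq_at d)" using \<open>odd (a c)\<close> by (auto simp: sq_at_def split: if_splits)
    ultimately show ?thesis by (simp add: sphere_avg_J Sv_def)
  next
    case False
    then have "a = (\<lambda>_. 0) \<or> (\<exists>c. a = sq_at c)" using even_cases[OF _ assms] by blast
    then show ?thesis
    proof
      assume "a = (\<lambda>_. 0)"
      then show ?thesis using V by (simp add: sphere_avg_J Sv_def mono_zero J_one)
    next
      assume "\<exists>c. a = sq_at c"
      then obtain c where c: "a = sq_at c" by blast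
      have "a \<noteq> (\<lambda>_. 0)" unfolding c sq_at_def by (metis zero_neq_numeral)
      then show ?thesis using V c by (auto simp: sphere_avg_J Sv_def J_sq)
    qed
  qed
qed



lemma sum_sq_at: "sum (sq_at c) (UNIV::'n::finite set) = 2"
  unfolding sq_at_def by simp

lemma peel:
  fixes a :: "'n::finite \<Rightarrow> nat"
  assumes "sum a UNIV = Suc k"
  shows "\<exists>c a'. a = (\<lambda>i. a' i + (if i = c then 1 else 0)) \<and> sum a' UNIV = k"
proof -
  obtain c where c: "a c > 0" using assms by (metis not_gr0 sum.neutral nat.simps(3))
  define a' where "a' = a(c := a c - 1)"
  have e: "a = (\<lambda>i. a' i + (if i = c then 1 else 0))" using c by (auto simp: a'_def)
  have "sum a UNIV = sum a' UNIV + 1"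
    by (subst e) (simp add: sum.distrib)
  then show ?thesis using e assms by auto
qed

lemma mon_peel: "mon (\<lambda>i. a' i + (if i = c then 1 else 0)) x = x $ c * mon a' x"
proof -
  have "mon (\<lambda>i. a' i + (if i = c then 1 else 0)) x = mon a' x * (\<Prod>i\<in>UNIV. (x $ i) ^ (if i = c then 1 else 0))"
    unfolding mon_def by (simp add: power_add prod.distrib)
  also have "(\<Prod>i\<in>UNIV. (x $ i) ^ (if i = c then 1 else 0)) = (\<Prod>i\<in>UNIV. if i = c then x $ c else 1)"
    by (rule prod.cong) auto
  finally show ?thesis by simp
qed

lemma sum0: "sum (a::'n::finite \<Rightarrow> nat) UNIV = 0 \<Longrightarrow> a = (\<lambda>_. 0)"
  by auto

lemma Sv_other:
  fixes a :: "'n::finite \<Rightarrow> nat"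
  assumes "sum a UNIV \<noteq> 0" "sum a UNIV \<noteq> 2" shows "Sv a = 0"
  using assms sum_sq_at unfolding Sv_def by fastforce

lemma design_from_moments:
  fixes X :: "(real^'n::finite) set"
  assumes fin: "finite X" and cardX: "card X = n"
    and M1: "\<And>a. (\<Sum>x\<in>X. x $ a) = 0"
    and M2: "\<And>a b. (\<Sum>x\<in>X. x $ a * x $ b) = (if a = b then real n / real CARD('n) else 0)"
    and M3: "\<And>a b c. (\<Sum>x\<in>X. x $ a * x $ b * x $ c) = 0"
    and deg: "sum \<alpha> UNIV \<le> 3"
  shows "(\<Sum>x\<in>X. mon \<alpha> x) = real n * Sv \<alpha>"
proof -
  have "sum \<alpha> UNIV = 0 \<or> sum \<alpha> UNIV = 1 \<or> sum \<alpha> UNIV = 2 \<or> sum \<alpha> UNIV = 3" using deg by linarith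
  then show ?thesis
  proof (elim disjE)
    assume h: "sum \<alpha> UNIV = 0"
    then have "\<alpha> = (\<lambda>_. 0)" by (rule sum0)
    then show ?thesis using cardX by (simp add: mono_zero Sv_def)
  next
    assume h: "sum \<alpha> UNIV = 1"
    then obtain c a' where e: "\<alpha> = (\<lambda>i. a' i + (if i = c then 1 else 0))" and s: "sum a' UNIV = 0"
      using peel[of \<alpha> 0] by auto
    have "a' = (\<lambda>_. 0)" using s by (rule sum0)
    then have "mon \<alpha> x = x $ c" for x unfolding e mon_peel by (simp add: mono_zero)
    then show ?thesis using M1 Sv_other[of \<alpha>] h by simp
  next
    assume h: "sum \<alpha> UNIV = 2"
    then obtain c a' where e: "\<alpha> = (\<lambda>i. a' i + (if i = c then 1 else 0))" and s: "sum a' UNIV = 1"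
      using peel[of \<alpha> 1] by auto
    then obtain b a'' where e': "a' = (\<lambda>i. a'' i + (if i = b then 1 else 0))" and s': "sum a'' UNIV = 0"
      using peel[of a' 0] by auto
    have "a'' = (\<lambda>_. 0)" using s' by (rule sum0)
    then have ea: "\<alpha> = (\<lambda>i. (if i = b then 1 else 0) + (if i = c then 1 else 0))" using e e' by simp
    have mx: "mon \<alpha> x = x $ c * x $ b" for x
      unfolding e e' mon_peel \<open>a'' = (\<lambda>_. 0)\<close> by (simp add: mono_zero)
    show ?thesis
    proof (cases "b = c")
      case True
      then have "\<alpha> = sq_at c" unfolding ea sq_at_def by auto
      then have "Sv \<alpha> = 1 / real CARD('n)" unfolding Sv_def sq_at_def by (auto dest: fun_cong[of _ _ c])
      then show ?thesis using M2[of c b] True by (simp add: mx)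
    next
      case False
      then have "\<alpha> c = 1" unfolding ea by simp
      then have "\<alpha> \<noteq> (\<lambda>_. 0)" "\<not> (\<exists>d. \<alpha> = sq_at d)" by (auto simp: sq_at_def split: if_splits)
      then have "Sv \<alpha> = 0" unfolding Sv_def by simp
      then show ?thesis using M2[of c b] False by (simp add: mx)
    qed
  next
    assume h: "sum \<alpha> UNIV = 3"
    then obtain c a' where e: "\<alpha> = (\<lambda>i. a' i + (if i = c then 1 else 0))" and s: "sum a' UNIV = 2"
      using peel[of \<alpha> 2] by auto
    then obtain b a'' where e': "a' = (\<lambda>i. a'' i + (if i = b then 1 else 0))" and s': "sum a'' UNIV = 1"
      using peel[of a' 1] by auto
    then obtain d a3 where e'': "a'' = (\<lambda>i. a3 i + (if i = d then 1 else 0))" and s'': "sum a3 UNIV = 0"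
      using peel[of a'' 0] by auto
    have "a3 = (\<lambda>_. 0)" using s'' by (rule sum0)
    have mx: "mon \<alpha> x = x $ c * x $ b * x $ d" for x
      unfolding e e' e'' mon_peel \<open>a3 = (\<lambda>_. 0)\<close> by (simp add: mono_zero)
    show ?thesis using M3[of c b d] Sv_other[of \<alpha>] h by (simp add: mx)
  qed
qed

lemma sphere_avg_lin:
  fixes c :: "('n::finite \<Rightarrow> nat) \<Rightarrow> real"
  assumes "finite A" "\<forall>\<alpha>\<in>A. sum \<alpha> UNIV \<le> 3"
  shows "sphere_avg (\<lambda>x::real^'n. \<Sum>\<alpha>\<in>A. c \<alpha> * mon \<alpha> x) = (\<Sum>\<alpha>\<in>A. c \<alpha> * Sv \<alpha>)"
proof -
  have "J (\<lambda>x::real^'n. \<Sum>\<alpha>\<in>A. c \<alpha> * mon \<alpha> x) = (\<Sum>\<alpha>\<in>A. J (\<lambda>x. c \<alpha> * mon \<alpha> x))"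
  proof (rule J_sum[OF assms(1)])
    fix \<alpha> assume "\<alpha> \<in> A"
    show "set_integrable lborel (ball 0 1) (\<lambda>x::real^'n. c \<alpha> * mon \<alpha> (nz x))"
      using mono_int[of \<alpha>] by (rule set_integrable_mult_right)
  qed
  also have "\<dots> = (\<Sum>\<alpha>\<in>A. c \<alpha> * J (mon \<alpha>))" by (simp add: J_cmult)
  finally have "sphere_avg (\<lambda>x::real^'n. \<Sum>\<alpha>\<in>A. c \<alpha> * mon \<alpha> x) = (\<Sum>\<alpha>\<in>A. c \<alpha> * (J (mon \<alpha>) / measure lborel (ball (0::real^'n) 1)))"
    by (simp add: sphere_avg_J sum_divide_distrib)
  also have "\<dots> = (\<Sum>\<alpha>\<in>A. c \<alpha> * Sv \<alpha>)"
    using assms(2) by (intro sum.cong refl) (simp add: sphere_mono[symmetric] sphere_avg_J)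
  finally show ?thesis .
qed

lemma design_thm:
  fixes X :: "(real^'n::finite) set"
  assumes fin: "finite X" and cardX: "card X = n" and n: "n > 0" and sph: "X \<subseteq> sphere 0 1"
    and M1: "\<And>a. (\<Sum>x\<in>X. x $ a) = 0"
    and M2: "\<And>a b. (\<Sum>x\<in>X. x $ a * x $ b) = (if a = b then real n / real CARD('n) else 0)"
    and M3: "\<And>a b c. (\<Sum>x\<in>X. x $ a * x $ b * x $ c) = 0"
  shows "spherical_design 3 X"
  unfolding spherical_design_def
proof (intro conjI allI impI)
  show "finite X" by fact
  show "X \<noteq> {}" using cardX n by auto
  show "X \<subseteq> sphere 0 1" by fact
  fix f :: "real^'n \<Rightarrow> real"
  assume "poly_deg_le 3 f"
  then obtain A c where A: "finite A" "\<forall>\<alpha>\<in>A. sum \<alpha> UNIV \<le> 3"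
    and f: "f = (\<lambda>x. \<Sum>\<alpha>\<in>A. c \<alpha> * mon \<alpha> x)"
    unfolding poly_deg_le_def mon_def by blast
  have "sphere_avg f = (\<Sum>\<alpha>\<in>A. c \<alpha> * Sv \<alpha>)" unfolding f by (rule sphere_avg_lin[OF A])
  also have "\<dots> = (\<Sum>\<alpha>\<in>A. c \<alpha> * (\<Sum>x\<in>X. mon \<alpha> x)) / real n"
    using A(2) n by (simp add: sum_divide_distrib design_from_moments[OF fin cardX M1 M2 M3])
  also have "\<dots> = (\<Sum>x\<in>X. f x) / real (card X)"
    unfolding f cardX by (simp add: sum_distrib_left sum.swap[of _ A X])
  finally show "sphere_avg f = (\<Sum>x\<in>X. f x) / real (card X)" .
qed



definition hc :: "nat \<Rightarrow> (nat \<Rightarrow> real) \<Rightarrow> (nat \<Rightarrow> int) \<Rightarrow> (nat \<Rightarrow> real) \<Rightarrow> nat \<Rightarrow> nat \<Rightarrow> real" where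
  "hc N A f p j k = A k * cos (2*pi * of_int (f k) * real j / real N + p k)"

definition fv :: "nat \<Rightarrow> int" where
  "fv k = (if k < 2 then 1 else if k = 2 then 0 else int ((k+1) div 2))"

definition pp :: "nat \<Rightarrow> real" where
  "pp k = (if odd k then -(pi/2) else 0)"

lemma fv_bound: "k < 2 * s + 1 \<Longrightarrow> 1 \<le> s \<Longrightarrow> 0 \<le> fv k \<and> fv k \<le> int s"
  unfolding fv_def by auto

lemma fv_zero: "fv k = 0 \<longleftrightarrow> k = 2"
  unfolding fv_def by auto

lemma fv_eq: "k \<noteq> l \<Longrightarrow> fv k = fv l \<Longrightarrow> odd k \<noteq> odd l"
  unfolding fv_def by (auto split: if_splits) presburger+

lemma cos_pp_diff: "cos (pp k - pp l) = (if odd k = odd l then 1 else 0)"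
  unfolding pp_def by auto

lemma dvd_small: "int N dvd (F::int) \<Longrightarrow> \<bar>F\<bar> < int N \<Longrightarrow> F = 0"
  by (meson dvd_abs_iff zdvd_not_zless zero_less_abs_iff)

lemma C_small: "\<bar>F\<bar> < int N \<Longrightarrow> C N F p = (if F = 0 then real N * cos p else 0)"
  unfolding C_def using dvd_small by auto

definition Ap :: "nat \<Rightarrow> real" where "Ap k = (if k < 2 then 1 else 0)"

lemma C5: "F \<in> {-3,-1,1,2,3::int} \<Longrightarrow> C 5 F p = 0"
  unfolding C_def by auto

lemma pent1: "(\<Sum>t<5. hc 5 Ap (\<lambda>_. 1) pp t k) = 0"
  unfolding hc_def using sum_cos1[of 5 "Ap k" 1 "pp k"] by (simp add: C5)

lemma pent2: "(\<Sum>t<5. hc 5 Ap (\<lambda>_. 1) pp t k * hc 5 Ap (\<lambda>_. 1) pp t l) = (if k = l \<and> k < 2 then 5/2 else 0)"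
proof -
  have "(\<Sum>t<5. hc 5 Ap (\<lambda>_. 1) pp t k * hc 5 Ap (\<lambda>_. 1) pp t l) = Ap k * Ap l / 2 * (C 5 0 (pp k - pp l) + C 5 2 (pp k + pp l))"
    unfolding hc_def using sum_cos2[of 5 "Ap k" 1 "pp k" "Ap l" 1 "pp l"] by simp
  also have "\<dots> = Ap k * Ap l / 2 * 5 * cos (pp k - pp l)" by (simp add: C5 C_def)
  also have "\<dots> = (if k = l \<and> k < 2 then 5/2 else 0)"
    unfolding cos_pp_diff Ap_def by (auto; presburger)
  finally show ?thesis .
qed

lemma pent3: "(\<Sum>t<5. hc 5 Ap (\<lambda>_. 1) pp t k * hc 5 Ap (\<lambda>_. 1) pp t l * hc 5 Ap (\<lambda>_. 1) pp t q) = 0"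
  unfolding hc_def using sum_cos3[of 5 "Ap k" 1 "pp k" "Ap l" 1 "pp l" "Ap q" 1 "pp q"] by (simp add: C5)

lemma anti2:
  fixes A :: "nat \<Rightarrow> real"
  assumes k: "k < 2 * s + 1" and l: "l < 2 * s + 1" and s: "1 \<le> s" and r: "2 * s < r"
  shows "(\<Sum>j<r. hc r A fv pp j k * hc r A fv pp j l) = (if k = l then (if k = 2 then real r * (A k)^2 else real r * (A k)^2 / 2) else 0)"
proof -
  have r0: "0 < r" using r by simp
  have "(\<Sum>j<r. hc r A fv pp j k * hc r A fv pp j l) = A k * A l / 2 * (C r (fv k - fv l) (pp k - pp l) + C r (fv k + fv l) (pp k + pp l))"
    unfolding hc_def by (rule sum_cos2[OF r0])
  also have "\<dots> = (if k = l then (if k = 2 then real r * (A k)^2 else real r * (A k)^2 / 2) else 0)"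
  proof -
    have bk: "0 \<le> fv k \<and> fv k \<le> int s" and bl: "0 \<le> fv l \<and> fv l \<le> int s" using fv_bound k l s by blast+
    have d1: "\<bar>fv k - fv l\<bar> < int r" and d2: "\<bar>fv k + fv l\<bar> < int r" using bk bl r by linarith+
    have e1: "C r (fv k - fv l) (pp k - pp l) = (if fv k = fv l then real r * (if odd k = odd l then 1 else 0) else 0)"
      using C_small[OF d1] cos_pp_diff[of k l] by simp
    have e2: "C r (fv k + fv l) (pp k + pp l) = (if k = 2 \<and> l = 2 then real r else 0)"
      using C_small[OF d2] bk bl fv_zero[of k] fv_zero[of l] by (auto simp: pp_def)
    show ?thesis
    proof (cases "k = l")
      case True
      then show ?thesis using e1 e2 by (auto simp: power2_eq_square)
    next
      case False
      then have "C r (fv k - fv l) (pp k - pp l) = 0" using e1 fv_eq[OF False] by auto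
      then show ?thesis using e2 False by simp
    qed
  qed
  finally show ?thesis .
qed

lemma cos_minus_half: "cos (y - pi/2) = sin y"
  by (simp add: cos_diff)

lemma pairs_sum:
  "(\<Sum>k\<in>{3..<2 * q + 3}. (cos (2*pi * of_int (fv k) * x + pp k))^2) = real q"
proof (induction q)
  case 0
  then show ?case by simp
next
  case (Suc q)
  have split: "{3..<2 * Suc q + 3} = insert (2*q+3) (insert (2*q+4) {3..<2 * q + 3})" by auto
  have f1: "fv (2*q+3) = int (q+2)" and f2: "fv (2*q+4) = int (q+2)" unfolding fv_def by auto
  have p1: "pp (2*q+3) = -(pi/2)" and p2: "pp (2*q+4) = 0" unfolding pp_def by auto
  have "(\<Sum>k\<in>{3..<2 * Suc q + 3}. (cos (2*pi * of_int (fv k) * x + pp k))^2)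
      = (cos (2*pi * of_int (fv (2*q+3)) * x + pp (2*q+3)))^2 + (cos (2*pi * of_int (fv (2*q+4)) * x + pp (2*q+4)))^2
        + (\<Sum>k\<in>{3..<2 * q + 3}. (cos (2*pi * of_int (fv k) * x + pp k))^2)"
    unfolding split by simp
  also have "(cos (2*pi * of_int (fv (2*q+3)) * x + pp (2*q+3)))^2 + (cos (2*pi * of_int (fv (2*q+4)) * x + pp (2*q+4)))^2 = 1"
    unfolding f1 f2 p1 p2 by (simp add: cos_minus_half)
  finally show ?case using Suc by simp
qed

lemma norm_anti:
  fixes A :: "nat \<Rightarrow> real"
  assumes s: "1 \<le> s" and A: "\<And>k. A k = (if k < 2 then a1 else if k = 2 then a2 else a3)"
  shows "(\<Sum>k<2 * s + 1. (hc r A fv pp j k)^2) = a1^2 + a2^2 + a3^2 * (real s - 1)"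
proof -
  let ?x = "real j / real r"
  have hx: "hc r A fv pp j k = A k * cos (2*pi * of_int (fv k) * ?x + pp k)" for k
    unfolding hc_def by (simp add: field_simps)
  have split: "{..<2 * s + 1} = {0,1,2} \<union> {3..<2 * s + 1}" using s by auto
  have "(\<Sum>k<2 * s + 1. (hc r A fv pp j k)^2) = (\<Sum>k\<in>{0,1,2}. (hc r A fv pp j k)^2) + (\<Sum>k\<in>{3..<2 * s + 1}. (hc r A fv pp j k)^2)"
    unfolding split by (rule sum.union_disjoint) auto
  also have "(\<Sum>k\<in>{0,1,2}. (hc r A fv pp j k)^2) = a1^2 + a2^2"
  proof -
    have "(\<Sum>k\<in>{0,1,2}. (hc r A fv pp j k)^2) = (hc r A fv pp j 0)^2 + (hc r A fv pp j 1)^2 + (hc r A fv pp j 2)^2"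
      by simp
    also have "(hc r A fv pp j 0)^2 = a1^2 * (cos (2*pi * ?x))^2"
      unfolding hx by (simp add: A fv_def pp_def power_mult_distrib)
    also have "(hc r A fv pp j 1)^2 = a1^2 * (sin (2*pi * ?x))^2"
      unfolding hx by (simp add: A fv_def pp_def cos_minus_half power_mult_distrib)
    also have "(hc r A fv pp j 2)^2 = a2^2"
      unfolding hx by (simp add: A fv_def pp_def)
    finally show ?thesis by (simp add: distrib_left[symmetric])
  qed
  also have "(\<Sum>k\<in>{3..<2 * s + 1}. (hc r A fv pp j k)^2) = a3^2 * (\<Sum>k\<in>{3..<2 * s + 1}. (cos (2*pi * of_int (fv k) * ?x + pp k))^2)"
    unfolding hx sum_distrib_left by (rule sum.cong) (auto simp: A power_mult_distrib)
  also have "\<dots> = a3^2 * (real s - 1)"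
  proof -
    obtain q where q: "s = Suc q" using s by (cases s) auto
    have e: "2 * s + 1 = 2 * q + 3" using q by simp
    show ?thesis unfolding e pairs_sum using q by simp
  qed
  finally show ?thesis by simp
qed

lemma norm_pent:
  assumes "2 \<le> m"
  shows "(\<Sum>k<m. (hc 5 Ap (\<lambda>_. 1) pp t k)^2) = 1"
proof -
  have split: "{..<m} = {0,1} \<union> {2..<m}" using assms by auto
  have "(\<Sum>k<m. (hc 5 Ap (\<lambda>_. 1) pp t k)^2) = (\<Sum>k\<in>{0,1}. (hc 5 Ap (\<lambda>_. 1) pp t k)^2) + (\<Sum>k\<in>{2..<m}. (hc 5 Ap (\<lambda>_. 1) pp t k)^2)"
    unfolding split by (rule sum.union_disjoint) auto
  also have "(\<Sum>k\<in>{2..<m}. (hc 5 Ap (\<lambda>_. 1) pp t k)^2) = 0" by (simp add: hc_def Ap_def)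
  also have "(\<Sum>k\<in>{0,1}. (hc 5 Ap (\<lambda>_. 1) pp t k)^2) = (cos (2*pi * real t / 5))^2 + (sin (2*pi * real t / 5))^2"
    by (simp add: hc_def Ap_def pp_def cos_minus_half)
  finally show ?thesis by simp
qed

lemma circle_inj:
  fixes t t' N :: nat
  assumes "t < N" "t' < N" and c: "cos (2*pi*real t/real N) = cos (2*pi*real t'/real N)"
    and s: "sin (2*pi*real t/real N) = sin (2*pi*real t'/real N)"
  shows "t = t'"
proof -
  let ?a = "2*pi*real t/real N" and ?b = "2*pi*real t'/real N"
  have "cos (?a - ?b) = 1" unfolding cos_diff c s by (simp add: power2_eq_square[symmetric])
  then obtain k :: int where k: "?a - ?b = real_of_int k * 2 * pi" using cos_one_2pi_int by blast
  have N0: "N > 0" using assms by simp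
  have h: "2*pi*(real t - real t') = 2*pi*(real_of_int k * real N)" using k N0 by (simp add: field_simps)
  then have "real t - real t' = real_of_int k * real N" by simp
  then have e: "int t - int t' = k * int N" by (metis of_int_eq_iff of_int_mult of_int_of_nat_eq of_int_diff)
  have "\<bar>int t - int t'\<bar> < int N" using assms by linarith
  then have "k = 0" using e N0 by (cases "k = 0") (auto simp: abs_mult)
  then show ?thesis using e by simp
qed



lemma sum_X:
  fixes P V :: "nat \<Rightarrow> real^'n::finite"
  assumes injP: "inj_on P {..<5}" and injV: "inj_on V {..<r}"
    and d1: "P ` {..<5} \<inter> V ` {..<r} = {}" and d2: "(P ` {..<5} \<union> V ` {..<r}) \<inter> (\<lambda>j. - V j) ` {..<r} = {}"
  shows "(\<Sum>x\<in>P ` {..<5} \<union> V ` {..<r} \<union> (\<lambda>j. - V j) ` {..<r}. h x)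
       = (\<Sum>t<5. h (P t)) + (\<Sum>j<r. h (V j)) + (\<Sum>j<r. h (- V j))"
proof -
  have injW: "inj_on (\<lambda>j. - V j) {..<r}" using injV by (auto simp: inj_on_def)
  have "(\<Sum>x\<in>P ` {..<5} \<union> V ` {..<r} \<union> (\<lambda>j. - V j) ` {..<r}. h x)
      = (\<Sum>x\<in>P ` {..<5} \<union> V ` {..<r}. h x) + (\<Sum>x\<in>(\<lambda>j. - V j) ` {..<r}. h x)"
    by (rule sum.union_disjoint) (use d2 in auto)
  also have "(\<Sum>x\<in>P ` {..<5} \<union> V ` {..<r}. h x) = (\<Sum>x\<in>P ` {..<5}. h x) + (\<Sum>x\<in>V ` {..<r}. h x)"
    by (rule sum.union_disjoint) (use d1 in auto)
  finally show ?thesis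
    by (simp add: sum.reindex[OF injP] sum.reindex[OF injV] sum.reindex[OF injW])
qed

lemma card_X:
  fixes P V :: "nat \<Rightarrow> real^'n::finite"
  assumes injP: "inj_on P {..<5}" and injV: "inj_on V {..<r}"
    and d1: "P ` {..<5} \<inter> V ` {..<r} = {}" and d2: "(P ` {..<5} \<union> V ` {..<r}) \<inter> (\<lambda>j. - V j) ` {..<r} = {}"
  shows "card (P ` {..<5} \<union> V ` {..<r} \<union> (\<lambda>j. - V j) ` {..<r}) = 5 + 2 * r"
proof -
  have injW: "inj_on (\<lambda>j. - V j) {..<r}" using injV by (auto simp: inj_on_def)
  have "card (P ` {..<5} \<union> V ` {..<r} \<union> (\<lambda>j. - V j) ` {..<r}) = card (P ` {..<5} \<union> V ` {..<r}) + card ((\<lambda>j. - V j) ` {..<r})"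
    by (rule card_Un_disjoint) (use d2 in auto)
  also have "card (P ` {..<5} \<union> V ` {..<r}) = card (P ` {..<5}) + card (V ` {..<r})"
    by (rule card_Un_disjoint) (use d1 in auto)
  finally show ?thesis by (simp add: card_image[OF injP] card_image[OF injV] card_image[OF injW])
qed

theorem proposition6p4:
  fixes d n :: nat
  assumes dim: "CARD('n::finite) = d + 1"
    and "even d" and "d > 0" and "odd n"
    and "real n \<ge> 5 * (real d + 1) / 2" and "n \<ge> 2 * d + 7"
  shows "\<exists>X :: (real^'n) set. card X = n \<and> spherical_design 3 X"
proof -
  note ev = \<open>even d\<close> and dpos = \<open>d > 0\<close> and nodd = \<open>odd n\<close>
    and big = \<open>real n \<ge> 5 * (real d + 1) / 2\<close> and nbig = \<open>n \<ge> 2 * d + 7\<close>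
  define m where "m = d + 1"
  define s where "s = d div 2"
  have ms: "m = 2 * s + 1" unfolding m_def s_def using ev by auto
  have s1: "1 \<le> s" unfolding s_def using ev dpos by auto
  define r where "r = (n - 5) div 2"
  have nr: "n = 2 * r + 5" unfolding r_def using nodd nbig by presburger
  have rm: "r \<ge> m" using nbig nr unfolding m_def by linarith
  have r2s: "2 * s < r" using rm ms by linarith
  have r0: "r > 0" using r2s by linarith
  have card_n: "CARD('n) = m" using dim m_def by simp
  have big2: "2 * n > 5 * m"
  proof -
    have "real (5 * m) \<le> real (2 * n)" using big unfolding m_def by simp
    then have "2 * n \<ge> 5 * m" by (simp only: of_nat_le_iff)
    moreover have "2 * n \<noteq> 5 * m" using ms by presburger
    ultimately show ?thesis by linarith
  qed
  define cc :: real where "cc = real n / real m"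
  have m0: "real m > 0" using ms by simp
  have ccm: "cc * real m = real n" unfolding cc_def using m0 by simp
  have cc52: "cc > 5/2" unfolding cc_def using big2 m0 by (simp add: field_simps)
  define A :: "nat \<Rightarrow> real" where
    "A k = (if k < 2 then sqrt ((cc - 5/2) / real r) else if k = 2 then sqrt (cc / (2 * real r)) else sqrt (cc / real r))" for k
  have A0: "(A 0)^2 = (cc - 5/2) / real r" "(A 1)^2 = (cc - 5/2) / real r" "A 0 > 0"
    using cc52 r0 by (simp_all add: A_def)
  have A2: "(A 2)^2 = cc / (2 * real r)" "A 2 > 0" using cc52 r0 by (simp_all add: A_def)
  have A3: "k \<ge> 3 \<Longrightarrow> (A k)^2 = cc / real r" for k using cc52 r0 by (simp add: A_def)
  obtain idx :: "'n \<Rightarrow> nat" where idx: "bij_betw idx UNIV {0..<m}"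
    using ex_bij_betw_finite_nat[of "UNIV::'n set"] card_n by auto
  have idx_inj: "idx a = idx b \<longleftrightarrow> a = b" for a b using idx by (auto simp: bij_betw_def inj_on_def)
  have idx_lt: "idx a < m" for a using idx by (auto simp: bij_betw_def)
  have idx_surj: "\<exists>a. idx a = k" if "k < m" for k
  proof -
    have "k \<in> range idx" using idx that by (auto simp: bij_betw_def)
    then show ?thesis by auto
  qed
  obtain a0 a1 a2 where a0: "idx a0 = 0" and a1: "idx a1 = 1" and a2: "idx a2 = 2"
    using idx_surj[of 0] idx_surj[of 1] idx_surj[of 2] ms s1 by force
  define vv :: "(nat \<Rightarrow> real) \<Rightarrow> real^'n" where "vv g = (\<chi> i. g (idx i))" for g
  have vv_nth: "vv g $ a = g (idx a)" for g a by (simp add: vv_def)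
  have sum_idx: "(\<Sum>a\<in>UNIV. F (idx a)) = (\<Sum>k<m. F k)" for F :: "nat \<Rightarrow> real"
    using sum.reindex_bij_betw[OF idx, of F] by (simp add: atLeast0LessThan)
  have norm_vv: "norm (vv g) = sqrt (\<Sum>k<m. (g k)^2)" for g
    unfolding norm_vec_def L2_set_def vv_nth using sum_idx[of "\<lambda>k. (g k)^2"] by simp
  define P where "P t = vv (hc 5 Ap (\<lambda>_. 1) pp t)" for t
  define V where "V j = vv (hc r A fv pp j)" for j
  define X where "X = P ` {..<5} \<union> V ` {..<r} \<union> (\<lambda>j. - V j) ` {..<r}"
  have P0: "P t $ a0 = cos (2*pi*real t/real 5)" and P1: "P t $ a1 = sin (2*pi*real t/real 5)" and P2: "P t $ a2 = 0" for t
    by (simp_all add: P_def vv_nth a0 a1 a2 hc_def Ap_def pp_def cos_minus_half)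
  have V0: "V j $ a0 = A 0 * cos (2*pi*real j/real r)" and V1: "V j $ a1 = A 1 * sin (2*pi*real j/real r)"
    and V2: "V j $ a2 = A 2" for j
    by (simp_all add: V_def vv_nth a0 a1 a2 hc_def fv_def pp_def cos_minus_half)
  have A01: "A 1 = A 0" by (simp add: A_def)
  have injP: "inj_on P {..<5}"
  proof (rule inj_onI)
    fix t t' assume "t \<in> {..<5}" "t' \<in> {..<5}" "P t = P t'"
    then show "t = t'" using circle_inj[of t 5 t'] P0[of t] P0[of t'] P1[of t] P1[of t'] by auto
  qed
  have injV: "inj_on V {..<r}"
  proof (rule inj_onI)
    fix t t' assume "t \<in> {..<r}" "t' \<in> {..<r}" "V t = V t'"
    then show "t = t'" using circle_inj[of t r t'] V0[of t] V0[of t'] V1[of t] V1[of t'] A0(3) A01 by auto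
  qed
  have d1: "P ` {..<5} \<inter> V ` {..<r} = {}" using P2 V2 A2(2) by (auto dest: arg_cong[where f="\<lambda>x. x $ a2"]) 
  have d2: "(P ` {..<5} \<union> V ` {..<r}) \<inter> (\<lambda>j. - V j) ` {..<r} = {}"
    using P2 V2 A2(2) by (fastforce dest: arg_cong[where f="\<lambda>x. x $ a2"])
  have cardX: "card X = n" unfolding X_def card_X[OF injP injV d1 d2] nr by simp
  have sumX: "(\<Sum>x\<in>X. h x) = (\<Sum>t<5. h (P t)) + (\<Sum>j<r. h (V j)) + (\<Sum>j<r. h (- V j))" for h
    unfolding X_def by (rule sum_X[OF injP injV d1 d2])
  have finX: "finite X" unfolding X_def by simp
  have normP: "norm (P t) = 1" for t
  proof -
    have "2 \<le> m" using ms s1 by simp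
    from norm_pent[OF this, of t] show ?thesis unfolding P_def norm_vv by simp
  qed
  have normV: "norm (V j) = 1" for j
  proof -
    have "(\<Sum>k<m. (hc r A fv pp j k)^2) = (sqrt ((cc - 5/2) / real r))^2 + (sqrt (cc / (2 * real r)))^2 + (sqrt (cc / real r))^2 * (real s - 1)"
      unfolding ms by (rule norm_anti[OF s1]) (simp add: A_def)
    also have "\<dots> = (cc - 5/2) / real r + cc / (2 * real r) + cc / real r * (real s - 1)"
      using cc52 r0 by simp
    also have "\<dots> = (cc * (2 * real s + 1) - 5) / (2 * real r)" using r0 by (simp add: field_simps)
    also have "\<dots> = 1" using ccm ms nr r0 by (simp add: field_simps)
    finally show ?thesis unfolding V_def norm_vv by simp
  qed
  have sph: "X \<subseteq> sphere 0 1" unfolding X_def using normP normV by auto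
  have Pn: "P t $ a = hc 5 Ap (\<lambda>_. 1) pp t (idx a)" for t a by (simp add: P_def vv_nth)
  have Vn: "V j $ a = hc r A fv pp j (idx a)" for j a by (simp add: V_def vv_nth)
  have M1: "(\<Sum>x\<in>X. x $ a) = 0" for a
    unfolding sumX by (simp add: Pn pent1 sum_negf)
  have M3: "(\<Sum>x\<in>X. x $ a * x $ b * x $ c) = 0" for a b c
    unfolding sumX by (simp add: Pn pent3 sum_negf)
  have M2: "(\<Sum>x\<in>X. x $ a * x $ b) = (if a = b then real n / real CARD('n) else 0)" for a b
  proof -
    have "(\<Sum>x\<in>X. x $ a * x $ b) = (\<Sum>t<5. hc 5 Ap (\<lambda>_. 1) pp t (idx a) * hc 5 Ap (\<lambda>_. 1) pp t (idx b))
        + 2 * (\<Sum>j<r. hc r A fv pp j (idx a) * hc r A fv pp j (idx b))"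
      unfolding sumX by (simp add: Pn Vn)
    also have "\<dots> = (if idx a = idx b \<and> idx a < 2 then 5/2 else 0)
       + 2 * (if idx a = idx b then (if idx a = 2 then real r * (A (idx a))^2 else real r * (A (idx a))^2 / 2) else 0)"
      unfolding pent2 using anti2[of "idx a" s "idx b" r A] idx_lt[of a] idx_lt[of b] ms s1 r2s by simp
    also have "\<dots> = (if a = b then cc else 0)"
    proof (cases "a = b")
      case True
      have "idx a < 2 \<or> idx a = 2 \<or> idx a \<ge> 3" by linarith
      then show ?thesis
      proof (elim disjE)
        assume h: "idx a < 2"
        then have "(A (idx a))^2 = (cc - 5/2) / real r" using A0 by (cases "idx a") auto
        then show ?thesis using True h r0 by (simp add: field_simps)
      next
        assume h: "idx a = 2"
        then show ?thesis using True A2 r0 by simp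
      next
        assume h: "idx a \<ge> 3"
        then show ?thesis using True A3[OF h] r0 by simp
      qed
    next
      case False
      then show ?thesis using idx_inj by simp
    qed
    finally show ?thesis unfolding card_n cc_def .
  qed
  have "spherical_design 3 X"
    by (rule design_thm[OF finX cardX _ sph M1 M2 M3]) (use nr in simp)
  then show ?thesis using cardX by blast
qed

end
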